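(* Let $X$ be a metrizable vector space over $K$ with metric $d_X$, and let $Y$ be a normed (respectively Banach) algebra over $K$ with $d_Y$ the metric induced by its norm. For maps $F_1,F_2:X\to Y$ define $(F_1*F_2)(x)=\frac{F_1(x)F_2(x)}{d_X(x,0)}$ for $x\neq0$ and $(F_1*F_2)(0)=F_1(0)F_2(0)$. Then $B_d(X,Y)$ with multiplication $*$ is a normed (respectively Banach) algebra with norm $\|F\|_{B_d(X,Y)}=d(F,0)$. If $Y$ is unital, then $B_d(X,Y)$ is unital.
   Context: $K$ is $\mathbb{R}$ or $\mathbb{C}$. For maps $F_1,F_2:X\to Y$, $d(F_1,F_2)=\max\left\{\sup_{x\neq0,x\in X}\frac{\|F_1(x)-F_2(x)\|_Y}{d_X(x,0)},\ \|F_1(0)-F_2(0)\|_Y\right\}\in[0,\infty]$, and $B_d(X,Y)$ is the set of maps $F:X\to Y$ with $d(F,0)<\infty$, with pointwise vector operations. A normed algebra has submultiplicative norm $\|ab\|\le\|a\|\|b\|$; a unital one has unit $1$ with $\|1\|=1$. *)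

theory Defs
  imports "HOL-Analysis.Analysis"
begin

definition R_or_C :: "'k::real_normed_field itself \<Rightarrow> bool" where
  "R_or_C _ \<longleftrightarrow>
     (\<exists>f::real \<Rightarrow> 'k. bij f \<and> (\<forall>x y. f (x + y) = f x + f y \<and> f (x * y) = f x * f y)
        \<and> (\<forall>x. norm (f x) = norm x)) \<or>
     (\<exists>f::complex \<Rightarrow> 'k. bij f \<and> (\<forall>x y. f (x + y) = f x + f y \<and> f (x * y) = f x * f y)
        \<and> (\<forall>x. norm (f x) = norm x))"

definition metric_vector_topology ::
  "('k::real_normed_field \<Rightarrow> 'a \<Rightarrow> 'a) \<Rightarrow> ('a::ab_group_add \<Rightarrow> 'a \<Rightarrow> real) \<Rightarrow> bool" where
  "metric_vector_topology sc dX \<longleftrightarrow>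
     (\<forall>xs ys x y. (\<lambda>n. dX (xs n) x) \<longlonglongrightarrow> 0 \<and> (\<lambda>n. dX (ys n) y) \<longlonglongrightarrow> 0
        \<longrightarrow> (\<lambda>n. dX (xs n + ys n) (x + y)) \<longlonglongrightarrow> 0) \<and>
     (\<forall>cs xs c x. cs \<longlonglongrightarrow> c \<and> (\<lambda>n. dX (xs n) x) \<longlonglongrightarrow> 0
        \<longrightarrow> (\<lambda>n. dX (sc (cs n) (xs n)) (sc c x)) \<longlonglongrightarrow> 0)"

definition normed_algebra_on ::
  "'c set \<Rightarrow> 'c \<Rightarrow> ('c \<Rightarrow> 'c \<Rightarrow> 'c) \<Rightarrow> ('k::real_normed_field \<Rightarrow> 'c \<Rightarrow> 'c)
     \<Rightarrow> ('c \<Rightarrow> 'c \<Rightarrow> 'c) \<Rightarrow> ('c \<Rightarrow> real) \<Rightarrow> bool" where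
  "normed_algebra_on S z ad sc mul nrm \<longleftrightarrow>
     \<comment> \<open>closure\<close>
     z \<in> S \<and>
     (\<forall>a\<in>S. \<forall>b\<in>S. ad a b \<in> S) \<and>
     (\<forall>c. \<forall>a\<in>S. sc c a \<in> S) \<and>
     (\<forall>a\<in>S. \<forall>b\<in>S. mul a b \<in> S) \<and>
     \<comment> \<open>vector space over K\<close>
     (\<forall>a\<in>S. \<forall>b\<in>S. \<forall>e\<in>S. ad (ad a b) e = ad a (ad b e)) \<and>
     (\<forall>a\<in>S. \<forall>b\<in>S. ad a b = ad b a) \<and>
     (\<forall>a\<in>S. ad z a = a) \<and>
     (\<forall>a\<in>S. \<exists>b\<in>S. ad a b = z) \<and>
     (\<forall>c. \<forall>a\<in>S. \<forall>b\<in>S. sc c (ad a b) = ad (sc c a) (sc c b)) \<and>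
     (\<forall>c c'. \<forall>a\<in>S. sc (c + c') a = ad (sc c a) (sc c' a)) \<and>
     (\<forall>c c'. \<forall>a\<in>S. sc c (sc c' a) = sc (c * c') a) \<and>
     (\<forall>a\<in>S. sc 1 a = a) \<and>
     \<comment> \<open>algebra over K\<close>
     (\<forall>a\<in>S. \<forall>b\<in>S. \<forall>e\<in>S. mul (mul a b) e = mul a (mul b e)) \<and>
     (\<forall>a\<in>S. \<forall>b\<in>S. \<forall>e\<in>S. mul a (ad b e) = ad (mul a b) (mul a e)) \<and>
     (\<forall>a\<in>S. \<forall>b\<in>S. \<forall>e\<in>S. mul (ad a b) e = ad (mul a e) (mul b e)) \<and>
     (\<forall>c. \<forall>a\<in>S. \<forall>b\<in>S. sc c (mul a b) = mul (sc c a) b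
                      \<and> sc c (mul a b) = mul a (sc c b)) \<and>
     \<comment> \<open>norm\<close>
     (\<forall>a\<in>S. nrm a = 0 \<longleftrightarrow> a = z) \<and>
     (\<forall>a\<in>S. 0 \<le> nrm a) \<and>
     (\<forall>a\<in>S. \<forall>b\<in>S. nrm (ad a b) \<le> nrm a + nrm b) \<and>
     (\<forall>c. \<forall>a\<in>S. nrm (sc c a) = norm c * nrm a) \<and>
     \<comment> \<open>submultiplicativity\<close>
     (\<forall>a\<in>S. \<forall>b\<in>S. nrm (mul a b) \<le> nrm a * nrm b)"

definition banach_algebra_on ::
  "'c set \<Rightarrow> 'c \<Rightarrow> ('c \<Rightarrow> 'c \<Rightarrow> 'c) \<Rightarrow> ('k::real_normed_field \<Rightarrow> 'c \<Rightarrow> 'c)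
     \<Rightarrow> ('c \<Rightarrow> 'c \<Rightarrow> 'c) \<Rightarrow> ('c \<Rightarrow> real) \<Rightarrow> bool" where
  "banach_algebra_on S z ad sc mul nrm \<longleftrightarrow>
     normed_algebra_on S z ad sc mul nrm \<and>
     (\<forall>f. (\<forall>n. f n \<in> S) \<and>
          (\<forall>e>0. \<exists>N. \<forall>m\<ge>N. \<forall>n\<ge>N. nrm (ad (f m) (sc (-1) (f n))) < e)
       \<longrightarrow> (\<exists>l\<in>S. (\<lambda>n. nrm (ad (f n) (sc (-1) l))) \<longlonglongrightarrow> 0))"

definition unital_on :: "'c set \<Rightarrow> ('c \<Rightarrow> 'c \<Rightarrow> 'c) \<Rightarrow> ('c \<Rightarrow> real) \<Rightarrow> bool" where
  "unital_on S mul nrm \<longleftrightarrow>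
     (\<exists>u\<in>S. nrm u = 1 \<and> (\<forall>a\<in>S. mul u a = a \<and> mul a u = a))"

definition dmap :: "('a::zero \<Rightarrow> 'a \<Rightarrow> real) \<Rightarrow> ('b::minus \<Rightarrow> real)
    \<Rightarrow> ('a \<Rightarrow> 'b) \<Rightarrow> ('a \<Rightarrow> 'b) \<Rightarrow> ereal" where
  "dmap dX nY F1 F2 =
     max (SUP x\<in>{x. x \<noteq> 0}. ereal (nY (F1 x - F2 x) / dX x 0))
         (ereal (nY (F1 0 - F2 0)))"

definition Bd :: "('a::zero \<Rightarrow> 'a \<Rightarrow> real) \<Rightarrow> ('b::{minus,zero} \<Rightarrow> real) \<Rightarrow> ('a \<Rightarrow> 'b) set" where
  "Bd dX nY = {F. dmap dX nY F (\<lambda>_. 0) < \<infinity>}"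

definition star :: "('k::real_normed_field \<Rightarrow> 'b \<Rightarrow> 'b) \<Rightarrow> ('a::zero \<Rightarrow> 'a \<Rightarrow> real)
    \<Rightarrow> ('a \<Rightarrow> 'b::times) \<Rightarrow> ('a \<Rightarrow> 'b) \<Rightarrow> ('a \<Rightarrow> 'b)" where
  "star scaleY dX F1 F2 = (\<lambda>x. if x = 0 then F1 0 * F2 0
        else scaleY (of_real (inverse (dX x 0))) (F1 x * F2 x))"

end

theory Submission
  imports Defs
begin
lemma ereal_bnd_fin:
  fixes g :: "'a \<Rightarrow> real"
  assumes "\<forall>x\<in>S. g x \<le> M"
  shows "\<exists>r. max (SUP x\<in>S. ereal (g x)) (ereal c) = ereal r"
proof -
  have "max (SUP x\<in>S. ereal (g x)) (ereal c) \<le> ereal (max M c)"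
    using assms by (auto intro!: SUP_least simp: max_def)
  moreover have "ereal c \<le> max (SUP x\<in>S. ereal (g x)) (ereal c)" by simp
  ultimately show ?thesis
    by (metis MInfty_neq_ereal(1) PInfty_neq_ereal(2) ereal_infty_less_eq(1) ereal_infty_less_eq(2) real_of_ereal.elims)
qed

lemma ereal_bnd_iff:
  fixes g :: "'a \<Rightarrow> real"
  shows "max (SUP x\<in>S. ereal (g x)) (ereal c) < \<infinity> \<longleftrightarrow> (\<exists>M. \<forall>x\<in>S. g x \<le> M)"
proof
  assume "max (SUP x\<in>S. ereal (g x)) (ereal c) < \<infinity>"
  moreover have "ereal c \<le> max (SUP x\<in>S. ereal (g x)) (ereal c)" by simp
  ultimately obtain r where r: "max (SUP x\<in>S. ereal (g x)) (ereal c) = ereal r"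
    by (metis ereal_infty_less_eq(2) less_ereal.simps(4) not_less_iff_gr_or_eq real_of_ereal.elims)
  have "\<forall>x\<in>S. g x \<le> r"
  proof
    fix x assume "x \<in> S"
    hence "ereal (g x) \<le> (SUP x\<in>S. ereal (g x))" by (rule SUP_upper)
    also have "\<dots> \<le> ereal r" using r by (metis max.cobounded1)
    finally show "g x \<le> r" by simp
  qed
  thus "\<exists>M. \<forall>x\<in>S. g x \<le> M" by blast
next
  assume "\<exists>M. \<forall>x\<in>S. g x \<le> M"
  then obtain M where "\<forall>x\<in>S. g x \<le> M" by blast
  from ereal_bnd_fin[OF this, of c] obtain r where "max (SUP x\<in>S. ereal (g x)) (ereal c) = ereal r" by blast
  thus "max (SUP x\<in>S. ereal (g x)) (ereal c) < \<infinity>" by simp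
qed

lemma ereal_bnd_props:
  fixes g :: "'a \<Rightarrow> real"
  assumes "\<forall>x\<in>S. g x \<le> M"
  shows "c \<le> real_of_ereal (max (SUP x\<in>S. ereal (g x)) (ereal c))"
    and "x\<in>S \<Longrightarrow> g x \<le> real_of_ereal (max (SUP x\<in>S. ereal (g x)) (ereal c))"
    and "c \<le> M' \<Longrightarrow> \<forall>x\<in>S. g x \<le> M' \<Longrightarrow> real_of_ereal (max (SUP x\<in>S. ereal (g x)) (ereal c)) \<le> M'"
proof -
  obtain r where r: "max (SUP x\<in>S. ereal (g x)) (ereal c) = ereal r"
    using ereal_bnd_fin[OF assms] by blast
  show "c \<le> real_of_ereal (max (SUP x\<in>S. ereal (g x)) (ereal c))"
    using r by (metis max.cobounded2 ereal_less_eq(3) real_of_ereal.simps(1))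
  show "g x \<le> real_of_ereal (max (SUP x\<in>S. ereal (g x)) (ereal c))" if "x \<in> S"
  proof -
    have "ereal (g x) \<le> (SUP x\<in>S. ereal (g x))" using that by (rule SUP_upper)
    also have "\<dots> \<le> ereal r" using r by (metis max.cobounded1)
    finally show ?thesis using r by simp
  qed
  show "real_of_ereal (max (SUP x\<in>S. ereal (g x)) (ereal c)) \<le> M'" if "c \<le> M'" "\<forall>x\<in>S. g x \<le> M'"
  proof -
    have "max (SUP x\<in>S. ereal (g x)) (ereal c) \<le> ereal M'"
      using that by (auto intro!: SUP_least)
    thus ?thesis using r by simp
  qed
qed

context
  fixes dX :: "'a::ab_group_add \<Rightarrow> 'a \<Rightarrow> real"
    and scaleY :: "'k::real_normed_field \<Rightarrow> 'b::ring \<Rightarrow> 'b"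
    and normY :: "'b \<Rightarrow> real"
  assumes MS: "Metric_space UNIV dX"
    and Y: "normed_algebra_on UNIV 0 (+) scaleY (*) normY"
begin

abbreviation nB where "nB F \<equiv> real_of_ereal (dmap dX normY F (\<lambda>_. 0))"

lemma dpos: "x \<noteq> 0 \<Longrightarrow> 0 < dX x 0"
  using MS Metric_space.mdist_pos_less by fastforce

lemma sc_add: "scaleY c (a+b) = scaleY c a + scaleY c b"
  using Y by (simp add: normed_algebra_on_def)
lemma sc_addc: "scaleY (c+c') a = scaleY c a + scaleY c' a"
  using Y by (simp add: normed_algebra_on_def)
lemma sc_sc: "scaleY c (scaleY c' a) = scaleY (c*c') a"
  using Y by (simp add: normed_algebra_on_def)
lemma sc_one: "scaleY 1 a = a"
  using Y by (simp add: normed_algebra_on_def)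
lemma sc_mulLR: "\<forall>c. \<forall>a\<in>UNIV. \<forall>b\<in>UNIV. scaleY c (a * b) = scaleY c a * b
                      \<and> scaleY c (a * b) = a * scaleY c b"
  using Y unfolding normed_algebra_on_def apply (elim conjE) by assumption
lemma sc_mulL: "scaleY c (a*b) = scaleY c a * b"
  using sc_mulLR by blast
lemma sc_mulR: "scaleY c (a*b) = a * scaleY c b"
  using sc_mulLR by blast
lemma n0: "normY a = 0 \<longleftrightarrow> a = 0"
  using Y by (simp add: normed_algebra_on_def)
lemma nnn: "0 \<le> normY a"
  using Y by (simp add: normed_algebra_on_def)
lemma ntri: "normY (a+b) \<le> normY a + normY b"
  using Y by (simp add: normed_algebra_on_def)
lemma nsc: "normY (scaleY c a) = norm c * normY a"
  using Y by (simp add: normed_algebra_on_def)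
lemma nmul: "normY (a*b) \<le> normY a * normY b"
  using Y by (simp add: normed_algebra_on_def)

lemma sc_zero: "scaleY 0 a = 0"
  using sc_addc[of 0 0 a] by simp
lemma sc_m1: "scaleY (-1) a = - a"
proof -
  have "a + scaleY (-1) a = 0" using sc_addc[of 1 "-1" a] by (simp add: sc_zero sc_one)
  thus ?thesis by (metis add.inverse_unique)
qed
lemma nminus: "normY (- a) = normY a"
  using nsc[of "-1" a] by (simp add: sc_m1)
lemma sc_minus: "scaleY c (- a) = - scaleY c a"
  by (metis sc_m1 sc_sc mult.commute)
lemma sc_diff: "scaleY c (a - b) = scaleY c a - scaleY c b"
  by (simp only: diff_conv_add_uminus sc_add sc_minus)
lemma ntri_diff: "normY (a - b) \<le> normY a + normY b"
  using ntri[of a "-b"] by (simp add: nminus)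
lemma ndiff_tri: "normY (a - c) \<le> normY (a - b) + normY (b - c)"
  using ntri[of "a-b" "b-c"] by simp

lemma dmap0: "dmap dX normY F (\<lambda>_. 0) = max (SUP x\<in>{x. x \<noteq> 0}. ereal (normY (F x) / dX x 0)) (ereal (normY (F 0)))"
  by (simp add: dmap_def)

lemma Bd_iff: "F \<in> Bd dX normY \<longleftrightarrow> (\<exists>M. \<forall>x. x \<noteq> 0 \<longrightarrow> normY (F x) \<le> M * dX x 0)"
proof -
  have "F \<in> Bd dX normY \<longleftrightarrow> (\<exists>M. \<forall>x\<in>{x. x \<noteq> 0}. normY (F x) / dX x 0 \<le> M)"
    unfolding Bd_def mem_Collect_eq dmap0 by (rule ereal_bnd_iff)
  also have "\<dots> \<longleftrightarrow> (\<exists>M. \<forall>x. x \<noteq> 0 \<longrightarrow> normY (F x) \<le> M * dX x 0)"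
    using dpos by (simp add: pos_divide_le_eq)
  finally show ?thesis .
qed

lemma nB_props:
  assumes "F \<in> Bd dX normY"
  shows "normY (F 0) \<le> nB F" "x \<noteq> 0 \<Longrightarrow> normY (F x) \<le> nB F * dX x 0" "0 \<le> nB F"
proof -
  obtain M where M: "\<forall>x. x \<noteq> 0 \<longrightarrow> normY (F x) \<le> M * dX x 0" using assms Bd_iff by blast
  have M': "\<forall>x\<in>{x. x \<noteq> 0}. normY (F x) / dX x 0 \<le> M" using M dpos by (simp add: pos_divide_le_eq)
  show 1: "normY (F 0) \<le> nB F" unfolding dmap0 by (rule ereal_bnd_props(1)[OF M'])
  show "normY (F x) \<le> nB F * dX x 0" if "x \<noteq> 0"
  proof -
    have "normY (F x) / dX x 0 \<le> nB F" unfolding dmap0 by (rule ereal_bnd_props(2)[OF M']) (use that in simp)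
    thus ?thesis using dpos[OF that] by (simp add: pos_divide_le_eq)
  qed
  show "0 \<le> nB F" using 1 nnn[of "F 0"] by linarith
qed

lemma nB_le:
  assumes "normY (F 0) \<le> M" "\<And>x. x \<noteq> 0 \<Longrightarrow> normY (F x) \<le> M * dX x 0"
  shows "F \<in> Bd dX normY" "nB F \<le> M"
proof -
  show "F \<in> Bd dX normY" using assms Bd_iff by blast
  have M': "\<forall>x\<in>{x. x \<noteq> 0}. normY (F x) / dX x 0 \<le> M" using assms dpos by (simp add: pos_divide_le_eq)
  show "nB F \<le> M" unfolding dmap0 by (rule ereal_bnd_props(3)[OF M' assms(1) M'])
qed


lemma star0: "star scaleY dX F G 0 = F 0 * G 0"
  by (simp add: star_def)
lemma starx: "x \<noteq> 0 \<Longrightarrow> star scaleY dX F G x = scaleY (of_real (inverse (dX x 0))) (F x * G x)"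
  by (simp add: star_def)

lemma sc_mulL': "scaleY c a * b = scaleY c (a*b)" by (simp add: sc_mulL)
lemma sc_mulR': "a * scaleY c b = scaleY c (a*b)" by (simp add: sc_mulR)
lemma sc_comm: "scaleY c (scaleY r a) = scaleY r (scaleY c a)"
  by (simp add: sc_sc mult.commute)

lemma zero_Bd: "(\<lambda>_. 0) \<in> Bd dX normY" and nB_zero: "nB (\<lambda>_. 0) = 0"
proof -
  have "normY 0 = 0" using n0 by simp
  hence h: "(\<lambda>_. 0) \<in> Bd dX normY \<and> nB (\<lambda>_. 0) \<le> 0" using nB_le[of "\<lambda>_. 0" 0] by auto
  thus "(\<lambda>_. 0) \<in> Bd dX normY" by blast
  thus "nB (\<lambda>_. 0) = 0" using nB_props(3)[of "\<lambda>_. 0"] conjunct2[OF h] by linarith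
qed

lemma add_Bd:
  assumes "F \<in> Bd dX normY" "G \<in> Bd dX normY"
  shows "(\<lambda>x. F x + G x) \<in> Bd dX normY" "nB (\<lambda>x. F x + G x) \<le> nB F + nB G"
proof -
  have a: "normY (F 0 + G 0) \<le> nB F + nB G"
    using ntri[of "F 0" "G 0"] nB_props(1)[OF assms(1)] nB_props(1)[OF assms(2)] by linarith
  have b: "normY (F x + G x) \<le> (nB F + nB G) * dX x 0" if "x \<noteq> 0" for x
    using ntri[of "F x" "G x"] nB_props(2)[OF assms(1) that] nB_props(2)[OF assms(2) that]
    by (simp add: distrib_right)
  show "(\<lambda>x. F x + G x) \<in> Bd dX normY" "nB (\<lambda>x. F x + G x) \<le> nB F + nB G"
    using nB_le[of "\<lambda>x. F x + G x", OF _ b] a by auto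
qed

lemma sc_Bd_le:
  assumes "F \<in> Bd dX normY"
  shows "(\<lambda>x. scaleY c (F x)) \<in> Bd dX normY" "nB (\<lambda>x. scaleY c (F x)) \<le> norm c * nB F"
proof -
  have a: "normY (scaleY c (F 0)) \<le> norm c * nB F"
    using nB_props(1)[OF assms] by (simp add: nsc mult_left_mono)
  have b: "normY (scaleY c (F x)) \<le> (norm c * nB F) * dX x 0" if "x \<noteq> 0" for x
    using nB_props(2)[OF assms that] by (simp add: nsc mult.assoc mult_left_mono)
  show "(\<lambda>x. scaleY c (F x)) \<in> Bd dX normY" "nB (\<lambda>x. scaleY c (F x)) \<le> norm c * nB F"
    using nB_le[of "\<lambda>x. scaleY c (F x)", OF _ b] a by auto
qed

lemma sc_Bd_eq:
  assumes "F \<in> Bd dX normY"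
  shows "nB (\<lambda>x. scaleY c (F x)) = norm c * nB F"
proof (cases "c = 0")
  case True
  thus ?thesis using nB_zero by (simp add: sc_zero)
next
  case False
  have "nB F = nB (\<lambda>x. scaleY (inverse c) (scaleY c (F x)))"
    using False by (simp add: sc_sc sc_one)
  also have "\<dots> \<le> norm (inverse c) * nB (\<lambda>x. scaleY c (F x))"
    by (rule sc_Bd_le(2)[OF sc_Bd_le(1)[OF assms]])
  finally have "nB F \<le> norm (inverse c) * nB (\<lambda>x. scaleY c (F x))" .
  hence "norm c * nB F \<le> norm c * (norm (inverse c) * nB (\<lambda>x. scaleY c (F x)))"
    by (simp add: mult_left_mono)
  also have "\<dots> = nB (\<lambda>x. scaleY c (F x))"
    using False by (simp add: norm_inverse)
  finally have "norm c * nB F \<le> nB (\<lambda>x. scaleY c (F x))" .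
  thus ?thesis using sc_Bd_le(2)[OF assms, of c] by linarith
qed

lemma diff_Bd:
  assumes "F \<in> Bd dX normY" "G \<in> Bd dX normY"
  shows "(\<lambda>x. F x - G x) \<in> Bd dX normY"
proof -
  have "(\<lambda>x. F x + scaleY (-1) (G x)) \<in> Bd dX normY"
    by (rule add_Bd(1)[OF assms(1) sc_Bd_le(1)[OF assms(2)]])
  thus ?thesis by (simp add: sc_m1)
qed

lemma mul_Bd:
  assumes "F \<in> Bd dX normY" "G \<in> Bd dX normY"
  shows "star scaleY dX F G \<in> Bd dX normY" "nB (star scaleY dX F G) \<le> nB F * nB G"
proof -
  have a: "normY (star scaleY dX F G 0) \<le> nB F * nB G"
    using nmul[of "F 0" "G 0"] nB_props(1)[OF assms(1)] nB_props(1)[OF assms(2)] nnn[of "F 0"] nnn[of "G 0"]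
    by (simp add: star0) (meson mult_mono order_trans nB_props(3) assms)
  have b: "normY (star scaleY dX F G x) \<le> (nB F * nB G) * dX x 0" if "x \<noteq> 0" for x
  proof -
    have d: "0 < dX x 0" using dpos that by blast
    have "normY (F x * G x) \<le> (nB F * dX x 0) * (nB G * dX x 0)"
      using nmul[of "F x" "G x"] nB_props(2)[OF assms(1) that] nB_props(2)[OF assms(2) that] nnn[of "F x"] nnn[of "G x"]
      by (meson mult_mono order_trans mult_nonneg_nonneg nB_props(3) assms d less_imp_le)
    hence "inverse (dX x 0) * normY (F x * G x) \<le> inverse (dX x 0) * ((nB F * dX x 0) * (nB G * dX x 0))"
      using d by (simp add: mult_left_mono)
    also have "\<dots> = (nB F * nB G) * dX x 0" using d by (simp add: field_simps)
    finally have *: "inverse (dX x 0) * normY (F x * G x) \<le> (nB F * nB G) * dX x 0" .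
    have "norm (of_real (inverse (dX x 0)) :: 'k) = inverse (dX x 0)"
      by (simp only: norm_of_real) (use d in simp)
    thus ?thesis using * by (simp only: starx[OF that] nsc)
  qed
  show "star scaleY dX F G \<in> Bd dX normY" "nB (star scaleY dX F G) \<le> nB F * nB G"
    using nB_le[of "star scaleY dX F G", OF _ b] a by auto
qed


lemma nB_eq0: "F \<in> Bd dX normY \<Longrightarrow> nB F = 0 \<longleftrightarrow> F = (\<lambda>_. 0)"
proof
  assume F: "F \<in> Bd dX normY" and z: "nB F = 0"
  show "F = (\<lambda>_. 0)"
  proof
    fix x
    have "normY (F x) \<le> 0"
      using nB_props(1)[OF F] nB_props(2)[OF F, of x] z by (cases "x = 0") auto
    thus "F x = 0" using nnn[of "F x"] n0 by (simp add: order_antisym)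
  qed
next
  assume "F = (\<lambda>_. 0)" thus "nB F = 0" using nB_zero by simp
qed

lemma main_normed:
  "normed_algebra_on (Bd dX normY) (\<lambda>_. 0) (\<lambda>F G x. F x + G x)
     (\<lambda>c F x. scaleY c (F x)) (star scaleY dX) (\<lambda>F. real_of_ereal (dmap dX normY F (\<lambda>_. 0)))"
  unfolding normed_algebra_on_def
proof (intro conjI)
  show "(\<lambda>_. 0) \<in> Bd dX normY" by (rule zero_Bd)
  show "\<forall>a\<in>Bd dX normY. \<forall>b\<in>Bd dX normY. (\<lambda>x. a x + b x) \<in> Bd dX normY"
    using add_Bd by blast
  show "\<forall>c. \<forall>a\<in>Bd dX normY. (\<lambda>x. scaleY c (a x)) \<in> Bd dX normY"
    using sc_Bd_le by blast
  show "\<forall>a\<in>Bd dX normY. \<forall>b\<in>Bd dX normY. star scaleY dX a b \<in> Bd dX normY"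
    using mul_Bd by blast
  show "\<forall>a\<in>Bd dX normY. \<forall>b\<in>Bd dX normY. \<forall>e\<in>Bd dX normY.
          (\<lambda>x. (\<lambda>x. a x + b x) x + e x) = (\<lambda>x. a x + (\<lambda>x. b x + e x) x)"
    by (simp add: add.assoc)
  show "\<forall>a\<in>Bd dX normY. \<forall>b\<in>Bd dX normY. (\<lambda>x. a x + b x) = (\<lambda>x. b x + a x)"
    by (simp add: add.commute)
  show "\<forall>a\<in>Bd dX normY. (\<lambda>x. 0 + a x) = a" by simp
  show "\<forall>a\<in>Bd dX normY. \<exists>b\<in>Bd dX normY. (\<lambda>x. a x + b x) = (\<lambda>_. 0)"
  proof
    fix a assume a: "a \<in> Bd dX normY"
    have "(\<lambda>x. scaleY (-1) (a x)) \<in> Bd dX normY" using sc_Bd_le(1)[OF a] .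
    hence "(\<lambda>x. - a x) \<in> Bd dX normY" by (simp add: sc_m1)
    thus "\<exists>b\<in>Bd dX normY. (\<lambda>x. a x + b x) = (\<lambda>_. 0)" by force
  qed
  show "\<forall>c. \<forall>a\<in>Bd dX normY. \<forall>b\<in>Bd dX normY.
          (\<lambda>x. scaleY c ((\<lambda>x. a x + b x) x)) = (\<lambda>x. (\<lambda>x. scaleY c (a x)) x + (\<lambda>x. scaleY c (b x)) x)"
    by (simp add: sc_add)
  show "\<forall>c c'. \<forall>a\<in>Bd dX normY. (\<lambda>x. scaleY (c + c') (a x)) = (\<lambda>x. (\<lambda>x. scaleY c (a x)) x + (\<lambda>x. scaleY c' (a x)) x)"
    by (simp add: sc_addc)
  show "\<forall>c c'. \<forall>a\<in>Bd dX normY. (\<lambda>x. scaleY c ((\<lambda>x. scaleY c' (a x)) x)) = (\<lambda>x. scaleY (c * c') (a x))"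
    by (simp add: sc_sc)
  show "\<forall>a\<in>Bd dX normY. (\<lambda>x. scaleY 1 (a x)) = a" by (simp add: sc_one)
  show "\<forall>a\<in>Bd dX normY. \<forall>b\<in>Bd dX normY. \<forall>e\<in>Bd dX normY.
          star scaleY dX (star scaleY dX a b) e = star scaleY dX a (star scaleY dX b e)"
    by (auto simp: star_def sc_mulL' sc_mulR' mult.assoc)
  show "\<forall>a\<in>Bd dX normY. \<forall>b\<in>Bd dX normY. \<forall>e\<in>Bd dX normY.
          star scaleY dX a (\<lambda>x. b x + e x) = (\<lambda>x. star scaleY dX a b x + star scaleY dX a e x)"
    by (auto simp: star_def distrib_left sc_add)
  show "\<forall>a\<in>Bd dX normY. \<forall>b\<in>Bd dX normY. \<forall>e\<in>Bd dX normY.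
          star scaleY dX (\<lambda>x. a x + b x) e = (\<lambda>x. star scaleY dX a e x + star scaleY dX b e x)"
    by (auto simp: star_def distrib_right sc_add)
  show "\<forall>c. \<forall>a\<in>Bd dX normY. \<forall>b\<in>Bd dX normY.
          (\<lambda>x. scaleY c (star scaleY dX a b x)) = star scaleY dX (\<lambda>x. scaleY c (a x)) b \<and>
          (\<lambda>x. scaleY c (star scaleY dX a b x)) = star scaleY dX a (\<lambda>x. scaleY c (b x))"
  proof (intro allI ballI conjI ext)
    fix c a b x
    show "scaleY c (star scaleY dX a b x) = star scaleY dX (\<lambda>x. scaleY c (a x)) b x"
      by (cases "x = 0") (simp_all add: star_def sc_mulL' sc_comm[of c])
    show "scaleY c (star scaleY dX a b x) = star scaleY dX a (\<lambda>x. scaleY c (b x)) x"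
      by (cases "x = 0") (simp_all add: star_def sc_mulR' sc_comm[of c])
  qed
  show "\<forall>a\<in>Bd dX normY. (nB a = 0) = (a = (\<lambda>_. 0))" using nB_eq0 by blast
  show "\<forall>a\<in>Bd dX normY. 0 \<le> nB a" using nB_props(3) by blast
  show "\<forall>a\<in>Bd dX normY. \<forall>b\<in>Bd dX normY. nB (\<lambda>x. a x + b x) \<le> nB a + nB b"
    using add_Bd(2) by blast
  show "\<forall>c. \<forall>a\<in>Bd dX normY. nB (\<lambda>x. scaleY c (a x)) = norm c * nB a"
    using sc_Bd_eq by blast
  show "\<forall>a\<in>Bd dX normY. \<forall>b\<in>Bd dX normY. nB (star scaleY dX a b) \<le> nB a * nB b"
    using mul_Bd(2) by blast
qed


definition ww :: "'a \<Rightarrow> real" where "ww x = (if x = 0 then 1 else dX x 0)"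

lemma ww_pos: "0 < ww x" using dpos by (simp add: ww_def)

lemma nB_w: "F \<in> Bd dX normY \<Longrightarrow> normY (F x) \<le> nB F * ww x"
  using nB_props[of F] by (cases "x = 0") (auto simp: ww_def)

lemma nB_le_w: assumes "\<And>x. normY (F x) \<le> M * ww x"
  shows "F \<in> Bd dX normY" "nB F \<le> M"
proof -
  have "normY (F 0) \<le> M" using assms[of 0] by (simp add: ww_def)
  moreover have "normY (F x) \<le> M * dX x 0" if "x \<noteq> 0" for x
    using assms[of x] that by (simp add: ww_def)
  ultimately show "F \<in> Bd dX normY" "nB F \<le> M" using nB_le by blast+
qed

lemma main_banach:
  assumes B: "banach_algebra_on UNIV 0 (+) scaleY (*) normY"
  shows "banach_algebra_on (Bd dX normY) (\<lambda>_. 0) (\<lambda>F G x. F x + G x)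
     (\<lambda>c F x. scaleY c (F x)) (star scaleY dX) (\<lambda>F. real_of_ereal (dmap dX normY F (\<lambda>_. 0)))"
  unfolding banach_algebra_on_def
proof (intro conjI main_normed allI impI)
  have Yc: "\<And>g. (\<forall>e>0. \<exists>N. \<forall>m\<ge>N. \<forall>n\<ge>N. normY (g m - g n) < e) \<Longrightarrow> \<exists>l. (\<lambda>n. normY (g n - l)) \<longlonglongrightarrow> 0"
    using B unfolding banach_algebra_on_def by (simp add: sc_m1)
  fix f :: "nat \<Rightarrow> 'a \<Rightarrow> 'b"
  assume H: "(\<forall>n. f n \<in> Bd dX normY) \<and>
          (\<forall>e>0. \<exists>N. \<forall>m\<ge>N. \<forall>n\<ge>N. nB (\<lambda>x. f m x + scaleY (- 1) (f n x)) < e)"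
  hence fB: "\<And>n. f n \<in> Bd dX normY" by blast
  from H have C: "\<forall>e>0. \<exists>N. \<forall>m\<ge>N. \<forall>n\<ge>N. nB (\<lambda>x. f m x - f n x) < e"
    by (simp add: sc_m1)
  have "\<forall>x. \<exists>l. (\<lambda>n. normY (f n x - l)) \<longlonglongrightarrow> 0"
  proof
    fix x
    show "\<exists>l. (\<lambda>n. normY (f n x - l)) \<longlonglongrightarrow> 0"
    proof (rule Yc, intro allI impI)
      fix e :: real assume e: "0 < e"
      obtain N where N: "\<forall>m\<ge>N. \<forall>n\<ge>N. nB (\<lambda>x. f m x - f n x) < e / ww x"
        using C e ww_pos[of x] by (meson divide_pos_pos)
      have "\<forall>m\<ge>N. \<forall>n\<ge>N. normY (f m x - f n x) < e"
      proof (intro allI impI)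
        fix m n assume "m \<ge> N" "n \<ge> N"
        hence lt: "nB (\<lambda>x. f m x - f n x) < e / ww x" using N by blast
        have "normY (f m x - f n x) \<le> nB (\<lambda>x. f m x - f n x) * ww x"
          using nB_w[OF diff_Bd[OF fB[of m] fB[of n]], of x] by simp
        also have "\<dots> < e / ww x * ww x" by (rule mult_strict_right_mono[OF lt ww_pos[of x]])
        also have "\<dots> = e" using ww_pos[of x] by simp
        finally show "normY (f m x - f n x) < e" .
      qed
      thus "\<exists>N. \<forall>m\<ge>N. \<forall>n\<ge>N. normY (f m x - f n x) < e" by blast
    qed
  qed
  then obtain L where L: "\<And>x. (\<lambda>n. normY (f n x - L x)) \<longlonglongrightarrow> 0" by metis
  have key: "\<exists>N. \<forall>n\<ge>N. (\<lambda>x. f n x - L x) \<in> Bd dX normY \<and> nB (\<lambda>x. f n x - L x) \<le> e"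
    if e: "0 < e" for e
  proof -
    obtain N where N: "\<forall>m\<ge>N. \<forall>n\<ge>N. nB (\<lambda>x. f m x - f n x) < e" using C e by blast
    have "(\<lambda>x. f n x - L x) \<in> Bd dX normY \<and> nB (\<lambda>x. f n x - L x) \<le> e" if n: "n \<ge> N" for n
    proof -
      have "normY (f n x - L x) \<le> e * ww x" for x
      proof (rule field_le_epsilon)
        fix eps :: real assume eps: "0 < eps"
        obtain M where M: "\<forall>m\<ge>M. norm (normY (f m x - L x) - 0) < eps"
          using LIMSEQ_D[OF L[of x] eps] by blast
        define m where "m = max M N"
        have "\<bar>normY (f m x - L x)\<bar> < eps" using M by (simp add: m_def)
        hence m1: "normY (f m x - L x) < eps" by linarith
        have lt: "nB (\<lambda>x. f n x - f m x) < e" using N n by (simp add: m_def)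
        have "normY (f n x - L x) \<le> normY (f n x - f m x) + normY (f m x - L x)"
          by (rule ndiff_tri)
        also have "normY (f n x - f m x) \<le> nB (\<lambda>x. f n x - f m x) * ww x"
          using nB_w[OF diff_Bd[OF fB[of n] fB[of m]], of x] by simp
        also have "nB (\<lambda>x. f n x - f m x) * ww x \<le> e * ww x"
          using lt ww_pos[of x] by (simp add: mult_right_mono)
        finally show "normY (f n x - L x) \<le> e * ww x + eps" using m1 by linarith
      qed
      thus ?thesis using nB_le_w[of "\<lambda>x. f n x - L x" e] by blast
    qed
    thus ?thesis by blast
  qed
  obtain N where "(\<lambda>x. f N x - L x) \<in> Bd dX normY" using key[of 1] by auto
  hence "(\<lambda>x. f N x - (f N x - L x)) \<in> Bd dX normY" using diff_Bd[OF fB] by blast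
  hence LB: "L \<in> Bd dX normY" by simp
  have "(\<lambda>n. nB (\<lambda>x. f n x - L x)) \<longlonglongrightarrow> 0"
  proof (rule LIMSEQ_I)
    fix r :: real assume r: "0 < r"
    obtain N where N: "\<forall>n\<ge>N. (\<lambda>x. f n x - L x) \<in> Bd dX normY \<and> nB (\<lambda>x. f n x - L x) \<le> r / 2"
      using key[of "r/2"] r by auto
    have "norm (nB (\<lambda>x. f n x - L x) - 0) < r" if "n \<ge> N" for n
    proof -
      have "nB (\<lambda>x. f n x - L x) \<le> r / 2" using N that by blast
      moreover have "0 \<le> nB (\<lambda>x. f n x - L x)" using N that nB_props(3) by blast
      ultimately show ?thesis using r by (simp only: real_norm_def diff_zero)
    qed
    thus "\<exists>no. \<forall>n\<ge>no. norm (nB (\<lambda>x. f n x - L x) - 0) < r" by blast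
  qed
  thus "\<exists>l\<in>Bd dX normY. (\<lambda>n. nB (\<lambda>x. f n x + scaleY (- 1) (l x))) \<longlonglongrightarrow> 0"
    using LB by (auto simp: sc_m1)
qed

lemma main_unital:
  assumes U: "unital_on UNIV (*) normY"
  shows "unital_on (Bd dX normY) (star scaleY dX) (\<lambda>F. real_of_ereal (dmap dX normY F (\<lambda>_. 0)))"
proof -
  obtain u where u1: "normY u = 1" and uu: "\<And>a. u * a = a" "\<And>a. a * u = a"
    using U unfolding unital_on_def by blast
  define V where "V = (\<lambda>x. if x = 0 then u else scaleY (of_real (dX x 0)) u)"
  have nV: "normY (V x) \<le> 1 * ww x" for x
    using u1 dpos[of x] by (cases "x = 0") (auto simp: V_def ww_def nsc)
  have VB: "V \<in> Bd dX normY" and "nB V \<le> 1" using nB_le_w[OF nV] by auto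
  moreover have "1 \<le> nB V" using nB_props(1)[OF VB] u1 by (simp add: V_def)
  ultimately have n1: "nB V = 1" by linarith
  have inv: "(of_real (inverse (dX x 0)) :: 'k) * of_real (dX x 0) = 1" if "x \<noteq> 0" for x
    using dpos[OF that] by (simp flip: of_real_mult)
  have "star scaleY dX V a = a \<and> star scaleY dX a V = a" for a
  proof (intro conjI ext)
    fix x
    show "star scaleY dX V a x = a x"
    proof (cases "x = 0")
      case True thus ?thesis by (simp add: star0 V_def uu)
    next
      case False
      thus ?thesis using inv[OF False]
        by (simp add: starx V_def sc_mulL' sc_sc uu sc_one del: of_real_inverse)
    qed
    show "star scaleY dX a V x = a x"
    proof (cases "x = 0")
      case True thus ?thesis by (simp add: star0 V_def uu)
    next
      case False
      thus ?thesis using inv[OF False]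
        by (simp add: starx V_def sc_mulR' sc_sc uu sc_one del: of_real_inverse)
    qed
  qed
  thus ?thesis unfolding unital_on_def using VB n1 by blast
qed

end

theorem corollary12:
  fixes scaleX :: "'k::real_normed_field \<Rightarrow> 'a::ab_group_add \<Rightarrow> 'a"
    and dX :: "'a \<Rightarrow> 'a \<Rightarrow> real"
    and scaleY :: "'k \<Rightarrow> 'b::ring \<Rightarrow> 'b"
    and normY :: "'b \<Rightarrow> real"
  assumes K: "R_or_C TYPE('k)"
    and X_vs: "vector_space scaleX"
    and X_metric: "Metric_space UNIV dX"
    and X_tvs: "metric_vector_topology scaleX dX"
    and Y: "normed_algebra_on UNIV 0 (+) scaleY (*) normY"
  shows "normed_algebra_on (Bd dX normY) (\<lambda>_. 0) (\<lambda>F G x. F x + G x)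
           (\<lambda>c F x. scaleY c (F x)) (star scaleY dX) (\<lambda>F. real_of_ereal (dmap dX normY F (\<lambda>_. 0)))
       \<and> (banach_algebra_on UNIV 0 (+) scaleY (*) normY \<longrightarrow>
          banach_algebra_on (Bd dX normY) (\<lambda>_. 0) (\<lambda>F G x. F x + G x)
           (\<lambda>c F x. scaleY c (F x)) (star scaleY dX) (\<lambda>F. real_of_ereal (dmap dX normY F (\<lambda>_. 0))))
       \<and> (unital_on UNIV (*) normY \<longrightarrow>
          unital_on (Bd dX normY) (star scaleY dX) (\<lambda>F. real_of_ereal (dmap dX normY F (\<lambda>_. 0))))"
  using main_normed[OF X_metric Y] main_banach[OF X_metric Y] main_unital[OF X_metric Y] by blast

end
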